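(* Let $P$ be a finite poset and $\epsilon$ the covering-relation labeling induced by a labeling of $P$. Suppose that $\Omega(P,\epsilon;t)=\Omega(P,-\epsilon;t+s)$ for some $s\in\mathbb{Z}$. Then $-r(-\epsilon)\le s\le r(\epsilon)$. Moreover $s=r(\epsilon)$ holds if and only if $P$ is $\epsilon$-graded, and $s=-r(-\epsilon)$ holds if and only if $P$ is $\epsilon$-graded.
   Context: $P$ has $p$ elements, $\omega:P\to\{1,\dots,p\}$ a bijection; write $x\prec y$ if $y$ covers $x$, $\epsilon(x,y)=1$ if $\omega(x)<\omega(y)$, $-1$ otherwise; $-\epsilon$ is $(-\epsilon)(x,y)=-\epsilon(x,y)$ (induced by $p+1-\omega$). A $(P,\epsilon)$-partition is an order-reversing map $\sigma:P\to\{1,2,\dots\}$ with $\sigma(x)>\sigma(y)$ whenever $x\prec y$ and $\epsilon(x,y)=-1$; $\Omega(P,\epsilon;n)$ is the number of such with largest part at most $n$ (a polynomial in $n$). $r(\epsilon)=\max\sum_{i=1}^\ell\epsilon(x_{i-1},x_i)$ over all maximal chains $x_0\prec\cdots\prec x_\ell$ of $P$, and similarly for $r(-\epsilon)$. $P$ is $\epsilon$-graded if this sum is the same for all maximal chains. *)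

theory Defs
  imports "HOL-Computational_Algebra.Polynomial"
begin

text \<open>The finite poset P is the (finite, nonempty) type 'a with its order.
  y covers x:\<close>
definition covers :: "'a::order \<Rightarrow> 'a \<Rightarrow> bool" where
  "covers x y \<longleftrightarrow> x < y \<and> \<not> (\<exists>z. x < z \<and> z < y)"

definition eps_of :: "('a \<Rightarrow> nat) \<Rightarrow> 'a \<Rightarrow> 'a \<Rightarrow> int" where
  "eps_of \<omega> x y = (if \<omega> x < \<omega> y then 1 else -1)"

definition neg_lab :: "('a \<Rightarrow> 'a \<Rightarrow> int) \<Rightarrow> 'a \<Rightarrow> 'a \<Rightarrow> int" where
  "neg_lab e x y = - e x y"

definition is_partition :: "('a::order \<Rightarrow> 'a \<Rightarrow> int) \<Rightarrow> ('a \<Rightarrow> nat) \<Rightarrow> bool" where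
  "is_partition e \<sigma> \<longleftrightarrow> (\<forall>x. 1 \<le> \<sigma> x) \<and> (\<forall>x y. x \<le> y \<longrightarrow> \<sigma> y \<le> \<sigma> x)
     \<and> (\<forall>x y. covers x y \<and> e x y = -1 \<longrightarrow> \<sigma> y < \<sigma> x)"

definition Omega_count :: "('a::order \<Rightarrow> 'a \<Rightarrow> int) \<Rightarrow> nat \<Rightarrow> nat" where
  "Omega_count e n = card {\<sigma>. is_partition e \<sigma> \<and> (\<forall>x. \<sigma> x \<le> n)}"

definition Omega :: "('a::order \<Rightarrow> 'a \<Rightarrow> int) \<Rightarrow> real poly" where
  "Omega e = (THE q. \<forall>n::nat. 1 \<le> n \<longrightarrow> poly q (real n) = real (Omega_count e n))"

definition max_chain :: "'a::order list \<Rightarrow> bool" where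
  "max_chain xs \<longleftrightarrow> xs \<noteq> [] \<and> (\<forall>i. Suc i < length xs \<longrightarrow> covers (xs ! i) (xs ! Suc i))
     \<and> (\<forall>z. \<not> z < hd xs) \<and> (\<forall>z. \<not> last xs < z)"

definition chain_sum :: "('a \<Rightarrow> 'a \<Rightarrow> int) \<Rightarrow> 'a list \<Rightarrow> int" where
  "chain_sum e xs = (\<Sum>i | Suc i < length xs. e (xs ! i) (xs ! Suc i))"

definition rank :: "('a::order \<Rightarrow> 'a \<Rightarrow> int) \<Rightarrow> int" where
  "rank e = Max {chain_sum e xs | xs. max_chain xs}"

definition graded :: "('a::order \<Rightarrow> 'a \<Rightarrow> int) \<Rightarrow> bool" where
  "graded e \<longleftrightarrow> (\<exists>c. \<forall>xs. max_chain xs \<longrightarrow> chain_sum e xs = c)"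

end

theory Submission
  imports Defs
begin

lemma covers_exists:
  fixes x z :: "'a::{order,finite}"
  assumes "x < z" shows "\<exists>y. covers x y \<and> y \<le> z"
proof -
  have "\<And>z. card {v. x < v \<and> v < z} = n \<Longrightarrow> x < z \<Longrightarrow> \<exists>y. covers x y \<and> y \<le> z" for n
  proof (induction n rule: less_induct)
    case (less n z)
    show ?case
    proof (cases "covers x z")
      case True then show ?thesis by auto
    next
      case False
      then obtain w where w: "x < w" "w < z" using less.prems unfolding covers_def by auto
      have "{v. x < v \<and> v < w} \<subset> {v. x < v \<and> v < z}" using w by (auto intro: order.strict_trans)
      then have "card {v. x < v \<and> v < w} < n" using less.prems(1) by (metis finite psubset_card_mono)
      then obtain y where "covers x y" "y \<le> w" using less.IH w(1) by blast
      then show ?thesis using w by auto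
    qed
  qed
  then show ?thesis using assms by blast
qed

lemma covers_induct_rel:
  fixes R :: "'a::{order,finite} \<Rightarrow> 'a \<Rightarrow> bool"
  assumes cov: "\<And>a b. covers a b \<Longrightarrow> R a b" and tr: "\<And>a b c. R a b \<Longrightarrow> R b c \<Longrightarrow> R a c"
  and "x < y" shows "R x y"
proof -
  have "\<And>x. card {v. x < v \<and> v < y} = n \<Longrightarrow> x < y \<Longrightarrow> R x y" for n
  proof (induction n rule: less_induct)
    case (less n x)
    obtain w where w: "covers x w" "w \<le> y" using covers_exists less.prems(2) by blast
    show ?case
    proof (cases "w = y")
      case True then show ?thesis using w cov by auto
    next
      case False
      then have wy: "w < y" using w by auto
      have xw: "x < w" using w(1) unfolding covers_def by auto
      have "{v. w < v \<and> v < y} \<subset> {v. x < v \<and> v < y}" using wy xw by (auto intro: order.strict_trans)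
      then have "card {v. w < v \<and> v < y} < n" using less.prems(1) by (metis finite psubset_card_mono)
      then have "R w y" using less.IH wy by blast
      then show ?thesis using tr cov w(1) by blast
    qed
  qed
  then show ?thesis using assms by blast
qed

lemma ex_maximal: "\<exists>M. (x::'a::{order,finite}) \<le> M \<and> (\<forall>z. \<not> M < z)"
proof -
  have "\<And>x::'a. card {z. x < z} = n \<Longrightarrow> \<exists>M. x \<le> M \<and> (\<forall>z. \<not> M < z)" for n
  proof (induction n rule: less_induct)
    case (less n x)
    show ?case
    proof (cases "\<exists>z. x < z")
      case False then show ?thesis by auto
    next
      case True
      then obtain z where z: "x < z" by auto
      have "{w. z < w} \<subset> {w. x < w}" using z by (auto intro: order.strict_trans)
      then have "card {w. z < w} < n" using less.prems by (metis finite psubset_card_mono)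
      then obtain M where "z \<le> M" "\<forall>w. \<not> M < w" using less.IH by blast
      then show ?thesis using z by (meson order.strict_implies_order order.trans)
    qed
  qed
  then show ?thesis by blast
qed

lemma ex_minimal: "\<exists>m. m \<le> (x::'a::{order,finite}) \<and> (\<forall>z. \<not> z < m)"
proof -
  have "\<And>x::'a. card {z. z < x} = n \<Longrightarrow> \<exists>m. m \<le> x \<and> (\<forall>z. \<not> z < m)" for n
  proof (induction n rule: less_induct)
    case (less n x)
    show ?case
    proof (cases "\<exists>z. z < x")
      case False then show ?thesis by auto
    next
      case True
      then obtain z where z: "z < x" by auto
      have "{w. w < z} \<subset> {w. w < x}" using z by (auto intro: order.strict_trans)
      then have "card {w. w < z} < n" using less.prems by (metis finite psubset_card_mono)
      then obtain m where "m \<le> z" "\<forall>w. \<not> w < m" using less.IH by blast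
      then show ?thesis using z by (meson order.strict_implies_order order.trans)
    qed
  qed
  then show ?thesis by blast
qed

fun cc :: "'a::order list \<Rightarrow> bool" where
  "cc (x # y # zs) = (covers x y \<and> cc (y # zs))" | "cc _ = True"

fun csum :: "('a \<Rightarrow> 'a \<Rightarrow> int) \<Rightarrow> 'a list \<Rightarrow> int" where
  "csum e (x # y # zs) = e x y + csum e (y # zs)" | "csum e _ = 0"

lemma chain_sum_csum: "chain_sum e xs = csum e xs"
proof (induction e xs rule: csum.induct)
  case (1 e x y zs)
  have "chain_sum e (x # y # zs) = (\<Sum>i<Suc (length zs). e ((x#y#zs) ! i) ((x#y#zs) ! Suc i))"
    unfolding chain_sum_def by (rule sum.cong) auto
  also have "\<dots> = e x y + (\<Sum>i<length zs. e ((y#zs) ! i) ((y#zs) ! Suc i))"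
    by (subst sum.lessThan_Suc_shift) simp
  also have "(\<Sum>i<length zs. e ((y#zs) ! i) ((y#zs) ! Suc i)) = chain_sum e (y # zs)"
    unfolding chain_sum_def by (rule sum.cong) auto
  finally show ?case using 1 by simp
qed (auto simp: chain_sum_def)

lemma cc_iff: "cc xs \<longleftrightarrow> (\<forall>i. Suc i < length xs \<longrightarrow> covers (xs ! i) (xs ! Suc i))"
proof (induction xs rule: cc.induct)
  case (1 x y zs)
  have "(\<forall>i. Suc i < length (x#y#zs) \<longrightarrow> covers ((x#y#zs) ! i) ((x#y#zs) ! Suc i))
     \<longleftrightarrow> covers x y \<and> (\<forall>j. Suc j < length (y#zs) \<longrightarrow> covers ((y#zs) ! j) ((y#zs) ! Suc j))"
    (is "?L \<longleftrightarrow> ?R")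
  proof
    assume ?L then show ?R by (metis Suc_less_eq length_Cons nth_Cons_0 nth_Cons_Suc zero_less_Suc)
  next
    assume R: ?R show ?L
    proof (intro allI impI)
      fix i assume "Suc i < length (x#y#zs)"
      then show "covers ((x#y#zs) ! i) ((x#y#zs) ! Suc i)" using R by (cases i) auto
    qed
  qed
  then show ?case using 1 by simp
qed auto

lemma max_chain_cc: "max_chain xs \<longleftrightarrow> xs \<noteq> [] \<and> cc xs \<and> (\<forall>z. \<not> z < hd xs) \<and> (\<forall>z. \<not> last xs < z)"
  unfolding max_chain_def cc_iff by blast

lemma cc_tl: "cc (x # xs) \<Longrightarrow> cc xs"
  by (cases xs) auto

lemma cc_above: "cc (x # xs) \<Longrightarrow> z \<in> set xs \<Longrightarrow> x < z"
proof (induction xs arbitrary: x)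
  case Nil then show ?case by simp
next
  case (Cons y ys)
  have xy: "x < y" using Cons.prems(1) by (simp add: covers_def)
  show ?case
  proof (cases "z = y")
    case True then show ?thesis using xy by simp
  next
    case False
    then have "z \<in> set ys" using Cons.prems by simp
    then have "y < z" using Cons.IH Cons.prems(1) by simp
    then show ?thesis using xy by simp
  qed
qed

lemma cc_distinct: "cc xs \<Longrightarrow> distinct xs"
proof (induction xs)
  case (Cons x xs)
  then show ?case using cc_above[of x xs x] cc_tl by auto
qed simp

lemma finite_cc: "finite {xs::'a::{order,finite} list. cc xs}"
proof -
  have "{xs::'a list. cc xs} \<subseteq> {xs. set xs \<subseteq> UNIV \<and> length xs \<le> card (UNIV::'a set)}"
  proof (clarsimp)
    fix xs :: "'a list" assume "cc xs"
    then have "length xs = card (set xs)" using cc_distinct distinct_card by metis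
    also have "\<dots> \<le> card (UNIV::'a set)" by (rule card_mono) auto
    finally show "length xs \<le> card (UNIV::'a set)" .
  qed
  then show ?thesis using finite_lists_length_le[of "UNIV::'a set"] finite_subset by auto
qed

definition upc :: "'a::order \<Rightarrow> 'a list \<Rightarrow> bool" where
  "upc x xs \<longleftrightarrow> xs \<noteq> [] \<and> hd xs = x \<and> cc xs \<and> (\<forall>z. \<not> last xs < z)"

definition fh :: "('a::order \<Rightarrow> 'a \<Rightarrow> int) \<Rightarrow> 'a \<Rightarrow> int" where
  "fh e x = Max {csum e xs | xs. upc x xs}"

lemma upc_Cons: "covers x y \<Longrightarrow> upc y ys \<Longrightarrow> upc x (x # ys)"
  unfolding upc_def by (cases ys) auto

lemma csum_Cons: "upc y ys \<Longrightarrow> csum e (x # ys) = e x y + csum e ys"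
  unfolding upc_def by (cases ys) auto

lemma ex_upc: "\<exists>xs. upc (x::'a::{order,finite}) xs"
proof -
  have "\<And>x::'a. card {z. x < z} = n \<Longrightarrow> \<exists>xs. upc x xs" for n
  proof (induction n rule: less_induct)
    case (less n x)
    show ?case
    proof (cases "\<exists>z. x < z")
      case False then have "upc x [x]" unfolding upc_def by auto
      then show ?thesis by blast
    next
      case True
      then obtain z where z: "x < z" by auto
      then obtain y where y: "covers x y" "y \<le> z" using covers_exists by blast
      have xy: "x < y" using y(1) unfolding covers_def by auto
      have "{w. y < w} \<subset> {w. x < w}" using xy by (auto intro: order.strict_trans)
      then have "card {w. y < w} < n" using less.prems by (metis finite psubset_card_mono)
      then obtain ys where "upc y ys" using less.IH by blast
      then show ?thesis using upc_Cons y(1) by blast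
    qed
  qed
  then show ?thesis by blast
qed

lemma finite_upc_sums: "finite {csum e xs | xs. upc (x::'a::{order,finite}) xs}"
proof -
  have "{csum e xs | xs. upc x xs} \<subseteq> csum e ` {xs. cc xs}" unfolding upc_def by auto
  then show ?thesis using finite_cc finite_subset by blast
qed

lemma fh_attained: "\<exists>xs. upc (x::'a::{order,finite}) xs \<and> csum e xs = fh e x"
proof -
  have "fh e x \<in> {csum e xs | xs. upc x xs}"
    unfolding fh_def using finite_upc_sums ex_upc by (intro Max_in) auto
  then show ?thesis by auto
qed

lemma fh_ge: "upc (x::'a::{order,finite}) xs \<Longrightarrow> csum e xs \<le> fh e x"
  unfolding fh_def using finite_upc_sums by (intro Max_ge) auto

lemma fh_cover: "covers (x::'a::{order,finite}) y \<Longrightarrow> e x y + fh e y \<le> fh e x"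
proof -
  assume c: "covers x y"
  obtain ys where ys: "upc y ys" "csum e ys = fh e y" using fh_attained by blast
  have "upc x (x # ys)" using upc_Cons c ys(1) by blast
  then have "csum e (x # ys) \<le> fh e x" by (rule fh_ge)
  then show ?thesis using csum_Cons[OF ys(1)] ys(2) by simp
qed

lemma upc_max: "(\<forall>z. \<not> M < z) \<Longrightarrow> upc M xs \<Longrightarrow> xs = [M]"
  unfolding upc_def by (cases xs rule: cc.cases) (auto simp: covers_def)

lemma fh_max: "(\<forall>z. \<not> (M::'a::{order,finite}) < z) \<Longrightarrow> fh e M = 0"
proof -
  assume m: "\<forall>z. \<not> M < z"
  obtain xs where "upc M xs" "csum e xs = fh e M" using fh_attained by blast
  then show ?thesis using upc_max[OF m] by fastforce
qed

lemma finite_rank_set: "finite {chain_sum e xs | xs. max_chain (xs::'a::{order,finite} list)}"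
proof -
  have "{chain_sum e xs | xs. max_chain (xs::'a list)} \<subseteq> chain_sum e ` {xs. cc xs}"
    unfolding max_chain_cc by auto
  then show ?thesis using finite_cc finite_subset by blast
qed

lemma fh_min_le: "(\<forall>z. \<not> z < (m::'a::{order,finite})) \<Longrightarrow> fh e m \<le> rank e"
proof -
  assume m: "\<forall>z. \<not> z < m"
  obtain xs where xs: "upc m xs" "csum e xs = fh e m" using fh_attained by blast
  have "max_chain xs" using xs(1) m unfolding max_chain_cc upc_def by auto
  then have "chain_sum e xs \<le> rank e" unfolding rank_def using finite_rank_set by (intro Max_ge) auto
  then show ?thesis using xs(2) chain_sum_csum by metis
qed

lemma telescope:
  fixes e :: "'a::order \<Rightarrow> 'a \<Rightarrow> int"
  assumes "\<forall>a b. covers a b \<longrightarrow> g a = e a b + g b"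
  shows "cc xs \<Longrightarrow> xs \<noteq> [] \<Longrightarrow> csum e xs = g (hd xs) - g (last xs)"
proof (induction xs rule: cc.induct)
  case (1 x y zs)
  then have "g x = e x y + g y" using assms by simp
  then show ?case using 1 by simp
qed auto

lemma not_graded_cases:
  fixes e :: "'a::{order,finite} \<Rightarrow> 'a \<Rightarrow> int"
  assumes "\<not> graded e"
  shows "(\<exists>m. (\<forall>z. \<not> z < m) \<and> fh e m < rank e) \<or> (\<exists>x y. covers x y \<and> e x y + fh e y < fh e x)"
proof (rule ccontr)
  assume n: "\<not> ?thesis"
  have h1: "fh e m = rank e" if "\<forall>z. \<not> z < m" for m
  proof -
    have "\<not> fh e m < rank e" using n that by blast
    then show ?thesis using fh_min_le[OF that, of e] by linarith
  qed
  have h2: "\<forall>(a::'a) b. covers a b \<longrightarrow> fh e a = e a b + fh e b"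
  proof (intro allI impI)
    fix a b :: 'a assume ab: "covers a b"
    have "\<not> e a b + fh e b < fh e a" using n ab by blast
    then show "fh e a = e a b + fh e b" using fh_cover[OF ab, of e] by linarith
  qed
  have "\<forall>xs. max_chain xs \<longrightarrow> chain_sum e xs = rank e"
  proof (intro allI impI)
    fix xs :: "'a list" assume mc: "max_chain xs"
    then have "csum e xs = fh e (hd xs) - fh e (last xs)"
      using telescope[OF h2] unfolding max_chain_cc by blast
    moreover have "fh e (last xs) = 0" using mc fh_max unfolding max_chain_cc by blast
    moreover have "fh e (hd xs) = rank e" using mc h1 unfolding max_chain_cc by blast
    ultimately show "chain_sum e xs = rank e" unfolding chain_sum_csum by simp
  qed
  then show False using assms unfolding graded_def by blast
qed

lemma ex_max_chain: "\<exists>xs::'a::{order,finite} list. max_chain xs"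
proof -
  obtain m :: 'a where m: "\<forall>z. \<not> z < m" using ex_minimal by blast
  obtain xs where "upc m xs" using ex_upc by blast
  then show ?thesis using m unfolding max_chain_cc upc_def by auto
qed

lemma chain_sum_neg: "chain_sum (neg_lab e) xs = - chain_sum e xs"
  unfolding chain_sum_def neg_lab_def by (simp add: sum_negf)

lemma neg_neg: "neg_lab (neg_lab e) = e"
  unfolding neg_lab_def by (intro ext) simp

lemma graded_neg: "graded (neg_lab e) \<longleftrightarrow> graded e"
proof
  assume "graded (neg_lab e)"
  then obtain c where "\<forall>xs. max_chain xs \<longrightarrow> chain_sum (neg_lab e) xs = c" unfolding graded_def by blast
  then have "\<forall>xs. max_chain xs \<longrightarrow> chain_sum e xs = -c" by (metis chain_sum_neg minus_minus)
  then show "graded e" unfolding graded_def by blast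
next
  assume "graded e"
  then obtain c where "\<forall>xs. max_chain xs \<longrightarrow> chain_sum e xs = c" unfolding graded_def by blast
  then have "\<forall>xs. max_chain xs \<longrightarrow> chain_sum (neg_lab e) xs = -c" by (simp add: chain_sum_neg)
  then show "graded (neg_lab e)" unfolding graded_def by blast
qed

lemma graded_rank:
  fixes e :: "'a::{order,finite} \<Rightarrow> 'a \<Rightarrow> int"
  assumes "graded e" shows "rank (neg_lab e) = - rank e"
proof -
  obtain c where c: "\<forall>xs. max_chain xs \<longrightarrow> chain_sum e xs = c" using assms unfolding graded_def by blast
  obtain xs0 :: "'a list" where xs0: "max_chain xs0" using ex_max_chain by blast
  have A: "{chain_sum e xs | xs. max_chain (xs::'a list)} = {c}"
  proof
    show "{chain_sum e xs | xs. max_chain (xs::'a list)} \<subseteq> {c}" using c by auto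
    have "chain_sum e xs0 = c" using c xs0 by simp
    then have "c \<in> {chain_sum e xs | xs. max_chain (xs::'a list)}" using xs0 by (intro CollectI exI[of _ xs0]) simp
    then show "{c} \<subseteq> {chain_sum e xs | xs. max_chain (xs::'a list)}" by simp
  qed
  have B: "{chain_sum (neg_lab e) xs | xs. max_chain (xs::'a list)} = {-c}"
  proof
    show "{chain_sum (neg_lab e) xs | xs. max_chain (xs::'a list)} \<subseteq> {-c}" using c by (auto simp: chain_sum_neg)
    have "chain_sum (neg_lab e) xs0 = -c" using c xs0 by (simp add: chain_sum_neg)
    then have "-c \<in> {chain_sum (neg_lab e) xs | xs. max_chain (xs::'a list)}" using xs0 by (intro CollectI exI[of _ xs0]) simp
    then show "{-c} \<subseteq> {chain_sum (neg_lab e) xs | xs. max_chain (xs::'a list)}" by simp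
  qed
  show ?thesis unfolding rank_def A B by simp
qed

definition valid :: "('a::order \<Rightarrow> 'a \<Rightarrow> int) \<Rightarrow> ('a \<Rightarrow> int) \<Rightarrow> bool" where
  "valid e \<tau> \<longleftrightarrow> (\<forall>x y. covers x y \<longrightarrow> \<tau> y \<le> \<tau> x \<and> (e x y = -1 \<longrightarrow> \<tau> y < \<tau> x))"

definition SS :: "('a::order \<Rightarrow> 'a \<Rightarrow> int) \<Rightarrow> int \<Rightarrow> ('a \<Rightarrow> int) set" where
  "SS e N = {\<tau>. valid e \<tau> \<and> (\<forall>x. 1 \<le> \<tau> x \<and> \<tau> x \<le> N)}"

definition CC :: "('a::order \<Rightarrow> 'a \<Rightarrow> int) \<Rightarrow> int \<Rightarrow> nat" where
  "CC e N = card (SS e N)"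

lemma valid_mono: "valid e \<tau> \<Longrightarrow> x \<le> y \<Longrightarrow> \<tau> y \<le> \<tau> (x::'a::{order,finite})"
proof -
  assume v: "valid e \<tau>" and xy: "x \<le> y"
  show ?thesis
  proof (cases "x = y")
    case False
    then have "x < y" using xy by simp
    then show ?thesis
      using covers_induct_rel[where R="\<lambda>a b. \<tau> b \<le> \<tau> a"] v unfolding valid_def by fastforce
  qed simp
qed

lemma finite_SS: "finite (SS e (N::int) :: ('a::{order,finite} \<Rightarrow> int) set)"
proof -
  have "SS e N \<subseteq> {f. \<forall>x. (x \<in> (UNIV::'a set) \<longrightarrow> f x \<in> {1..N}) \<and> (x \<notin> UNIV \<longrightarrow> f x = 0)}"
    unfolding SS_def by auto
  then show ?thesis using finite_set_of_finite_funs[of "UNIV::'a set" "{1..N}" 0] finite_subset by auto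
qed

lemma count_SS: "Omega_count e n = CC e (int n)" for e :: "'a::{order,finite} \<Rightarrow> 'a \<Rightarrow> int"
proof -
  let ?A = "{\<sigma>. is_partition e \<sigma> \<and> (\<forall>x. \<sigma> x \<le> n)}"
  have "bij_betw (\<lambda>\<sigma> x. int (\<sigma> x)) ?A (SS e (int n))"
  proof (rule bij_betw_imageI)
    show "inj_on (\<lambda>\<sigma> x. int (\<sigma> x)) ?A"
      by (intro inj_onI ext) (metis of_nat_eq_iff)
    show "(\<lambda>\<sigma> x. int (\<sigma> x)) ` ?A = SS e (int n)"
    proof
      show "(\<lambda>\<sigma> x. int (\<sigma> x)) ` ?A \<subseteq> SS e (int n)"
        unfolding SS_def valid_def is_partition_def covers_def by force
      show "SS e (int n) \<subseteq> (\<lambda>\<sigma> x. int (\<sigma> x)) ` ?A"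
      proof
        fix \<tau> assume t: "\<tau> \<in> SS e (int n)"
        let ?s = "\<lambda>x. nat (\<tau> x)"
        have eq: "\<tau> = (\<lambda>x. int (?s x))"
        proof (rule ext)
          fix x have "1 \<le> \<tau> x" using t unfolding SS_def by auto
          then show "\<tau> x = int (nat (\<tau> x))" by simp
        qed
        have v: "valid e \<tau>" using t unfolding SS_def by auto
        have "is_partition e ?s"
          unfolding is_partition_def
        proof (intro conjI allI impI)
          fix x have "1 \<le> \<tau> x" using t unfolding SS_def by blast
          then show "1 \<le> ?s x" by (simp add: le_nat_iff)
        next
          fix x y :: 'a assume "x \<le> y"
          then have "\<tau> y \<le> \<tau> x" using valid_mono v by blast
          then show "?s y \<le> ?s x" by simp
        next
          fix x y :: 'a assume "covers x y \<and> e x y = -1"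
          then have "\<tau> y < \<tau> x" using v unfolding valid_def by blast
          moreover have "1 \<le> \<tau> y" using t unfolding SS_def by blast
          ultimately show "?s y < ?s x" by (simp add: nat_less_eq_zless)
        qed
        moreover have "\<forall>x. ?s x \<le> n" using t unfolding SS_def by (auto simp: nat_le_iff)
        ultimately have "?s \<in> ?A" by blast
        then show "\<tau> \<in> (\<lambda>\<sigma> x. int (\<sigma> x)) ` ?A" using eq by (intro image_eqI[where x="?s"]) auto
      qed
    qed
  qed
  then show ?thesis unfolding Omega_count_def CC_def by (rule bij_betw_same_card)
qed

definition sig0 :: "'a::order \<Rightarrow> int" where "sig0 x = 1 + int (card {z. x < z})"

lemma sig0_strict: "x < y \<Longrightarrow> sig0 y < sig0 (x::'a::{order,finite})"
proof -
  assume xy: "x < y"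
  have "{z. y < z} \<subset> {z. x < z}" using xy by (auto intro: order.strict_trans)
  then have "card {z. y < z} < card {z. x < z}" by (metis finite psubset_card_mono)
  then show ?thesis unfolding sig0_def by simp
qed

lemma sig0_ge1: "1 \<le> sig0 x"
  unfolding sig0_def by simp

lemma sig0_le: "sig0 (x::'a::{order,finite}) \<le> int (card (UNIV::'a set))"
proof -
  have "{z. x < z} \<subseteq> UNIV - {x}" by auto
  then have "card {z. x < z} \<le> card (UNIV - {x::'a})" by (intro card_mono) auto
  also have "\<dots> = card (UNIV::'a set) - 1" by (simp add: card_Diff_singleton)
  finally have "card {z. x < z} \<le> card (UNIV::'a set) - 1" .
  moreover have "card (UNIV::'a set) \<ge> 1" using card_gt_0_iff[of "UNIV::'a set"] by simp
  ultimately show ?thesis unfolding sig0_def by linarith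
qed

lemma sig0_le2: "x < (y::'a::{order,finite}) \<Longrightarrow> sig0 y + 1 \<le> int (card (UNIV::'a set))"
proof -
  assume xy: "x < y"
  have "{z. y < z} \<subseteq> UNIV - {x, y}" using xy by auto
  then have "card {z. y < z} \<le> card (UNIV - {x, y::'a})" by (intro card_mono) auto
  also have "\<dots> = card (UNIV::'a set) - 2" using xy by (simp add: card_Diff_subset)
  finally have "card {z. y < z} \<le> card (UNIV::'a set) - 2" .
  moreover have "card {x, y} \<le> card (UNIV::'a set)" by (rule card_mono) auto
  then have "card (UNIV::'a set) \<ge> 2" using xy by simp
  ultimately show ?thesis unfolding sig0_def by linarith
qed

lemma sig0_two: "a < x \<Longrightarrow> x < y \<Longrightarrow> sig0 y + 2 \<le> sig0 (a::'a::{order,finite})"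
proof -
  assume ax: "a < x" and xy: "x < y"
  have "{z. y < z} \<union> {x, y} \<subseteq> {z. a < z}" using ax xy by (auto intro: order.strict_trans)
  then have "card ({z. y < z} \<union> {x, y}) \<le> card {z. a < z}" by (intro card_mono) auto
  moreover have "card ({z. y < z} \<union> {x, y}) = card {z. y < z} + 2"
    using xy by (subst card_Un_disjoint) auto
  ultimately show ?thesis unfolding sig0_def by linarith
qed

lemma SS_mono: "N \<le> N' \<Longrightarrow> SS e N \<subseteq> SS e N'"
  unfolding SS_def by (auto intro: order_trans)

lemma CC_mono: "N \<le> N' \<Longrightarrow> CC e N \<le> CC (e::'a::{order,finite} \<Rightarrow> 'a \<Rightarrow> int) N'"
  unfolding CC_def by (intro card_mono finite_SS SS_mono)

lemma CC_step: "int (card (UNIV::'a set)) \<le> N \<Longrightarrow> CC e N < CC (e::'a::{order,finite} \<Rightarrow> 'a \<Rightarrow> int) (N + 1)"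
proof -
  assume N: "int (card (UNIV::'a set)) \<le> N"
  define M0 where "M0 = Max (range (sig0::'a \<Rightarrow> int))"
  have "M0 \<in> range (sig0::'a \<Rightarrow> int)" unfolding M0_def by (intro Max_in) auto
  then obtain v :: 'a where v: "sig0 v = M0" by auto
  have M0ge: "\<And>x::'a. sig0 x \<le> M0" unfolding M0_def by (intro Max_ge) auto
  define \<tau> where "\<tau> = (\<lambda>x::'a. sig0 x + (N + 1 - M0))"
  have "valid e \<tau>" unfolding valid_def \<tau>_def covers_def using sig0_strict by fastforce
  moreover have "\<forall>x. 1 \<le> \<tau> x \<and> \<tau> x \<le> N + 1"
  proof
    fix x :: 'a
    have "sig0 x \<le> M0" by (rule M0ge)
    moreover have "1 \<le> sig0 x" by (rule sig0_ge1)
    moreover have "M0 \<le> N" using sig0_le[of v] v N by linarith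
    ultimately show "1 \<le> \<tau> x \<and> \<tau> x \<le> N + 1" unfolding \<tau>_def by linarith
  qed
  ultimately have "\<tau> \<in> SS e (N + 1)" unfolding SS_def by auto
  moreover have "\<tau> \<notin> SS e N"
  proof
    assume "\<tau> \<in> SS e N"
    then have "\<tau> v \<le> N" unfolding SS_def by blast
    moreover have "\<tau> v = N + 1" unfolding \<tau>_def using v by simp
    ultimately show False by simp
  qed
  ultimately have "SS e N \<subset> SS e (N + 1)" using SS_mono[of N "N+1" e] by auto
  then show ?thesis unfolding CC_def by (intro psubset_card_mono finite_SS)
qed

lemma CC_strict: "int (card (UNIV::'a set)) \<le> N \<Longrightarrow> N < N' \<Longrightarrow> CC e N < CC (e::'a::{order,finite} \<Rightarrow> 'a \<Rightarrow> int) N'"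
proof -
  assume N: "int (card (UNIV::'a set)) \<le> N" and NN: "N < N'"
  have "\<And>k. CC e N < CC e (N + 1 + int k)"
  proof -
    fix k show "CC e N < CC e (N + 1 + int k)"
    proof (induction k)
      case 0 then show ?case using CC_step[OF N] by simp
    next
      case (Suc k)
      have "CC e (N + 1 + int k) < CC e (N + 1 + int k + 1)" using N by (intro CC_step) linarith
      then show ?case using Suc by (simp add: add.assoc)
    qed
  qed
  from this[of "nat (N' - N - 1)"] show ?thesis using NN by simp
qed

definition pm :: "('a \<Rightarrow> 'a \<Rightarrow> int) \<Rightarrow> bool" where "pm e \<longleftrightarrow> (\<forall>x y. e x y = 1 \<or> e x y = -1)"

lemma pm_neg: "pm e \<Longrightarrow> pm (neg_lab e)"
  unfolding pm_def neg_lab_def by (metis equation_minus_iff)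

lemma pm_eps: "pm (eps_of \<omega>)"
  unfolding pm_def eps_of_def by simp

lemma neg_lab_m1: "neg_lab e x y = -1 \<longleftrightarrow> e x y = 1"
  unfolding neg_lab_def by auto

lemma phi_mem:
  fixes e :: "'a::{order,finite} \<Rightarrow> 'a \<Rightarrow> int"
  assumes pm: "pm e" and s: "\<sigma> \<in> SS e N"
  shows "(\<lambda>x. \<sigma> x + fh e x) \<in> SS (neg_lab e) (N + rank e)"
proof -
  let ?t = "\<lambda>x. \<sigma> x + fh e x"
  have vs: "valid e \<sigma>" and bs: "\<forall>x. 1 \<le> \<sigma> x \<and> \<sigma> x \<le> N" using s unfolding SS_def by auto
  have vt: "valid (neg_lab e) ?t"
    unfolding valid_def
  proof (intro allI impI)
    fix x y :: 'a assume c: "covers x y"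
    have f: "e x y + fh e y \<le> fh e x" using fh_cover[OF c] .
    have le: "\<sigma> y \<le> \<sigma> x" and st: "e x y = -1 \<Longrightarrow> \<sigma> y < \<sigma> x" using vs c unfolding valid_def by auto
    show "?t y \<le> ?t x \<and> (neg_lab e x y = -1 \<longrightarrow> ?t y < ?t x)"
    proof (cases "e x y = 1")
      case True then show ?thesis using f le by (simp add: neg_lab_def)
    next
      case False then have "e x y = -1" using pm unfolding pm_def by blast
      then show ?thesis using f st by (simp add: neg_lab_def)
    qed
  qed
  have "1 \<le> ?t x \<and> ?t x \<le> N + rank e" for x
  proof -
    obtain M where M: "x \<le> M" "\<forall>z. \<not> M < z" using ex_maximal by blast
    obtain m where m: "m \<le> x" "\<forall>z. \<not> z < m" using ex_minimal by blast
    have "?t M \<le> ?t x" using valid_mono[OF vt M(1)] .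
    moreover have "?t x \<le> ?t m" using valid_mono[OF vt m(1)] .
    moreover have "fh e M = 0" using fh_max M(2) by blast
    moreover have "fh e m \<le> rank e" using fh_min_le m(2) by blast
    moreover have "1 \<le> \<sigma> M" "\<sigma> m \<le> N" using bs by auto
    ultimately show ?thesis by linarith
  qed
  then show ?thesis using vt unfolding SS_def by blast
qed

lemma phi_inj: "inj_on (\<lambda>\<sigma> x. \<sigma> x + (g::'a \<Rightarrow> int) x) A"
proof (rule inj_onI)
  fix s t :: "'a \<Rightarrow> int" assume "(\<lambda>x. s x + g x) = (\<lambda>x. t x + g x)"
  then have "\<And>x. s x + g x = t x + g x" by (metis)
  then show "s = t" by (intro ext) simp
qed

lemma inj_count:
  fixes e :: "'a::{order,finite} \<Rightarrow> 'a \<Rightarrow> int"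
  assumes "pm e" shows "CC e N \<le> CC (neg_lab e) (N + rank e)"
  unfolding CC_def
proof (rule card_inj_on_le[OF phi_inj])
  show "(\<lambda>\<sigma> x. \<sigma> x + fh e x) ` SS e N \<subseteq> SS (neg_lab e) (N + rank e)" using phi_mem assms by blast
qed (rule finite_SS)

lemma strict_count:
  fixes e :: "'a::{order,finite} \<Rightarrow> 'a \<Rightarrow> int"
  assumes pm: "pm e" and ng: "\<not> graded e" and K: "2 * int (card (UNIV::'a set)) \<le> N + rank e"
  shows "CC e N < CC (neg_lab e) (N + rank e)"
proof -
  let ?phi = "\<lambda>\<sigma> x. \<sigma> x + fh e x"
  let ?K = "N + rank e"
  let ?p = "int (card (UNIV::'a set))"
  have p1: "1 \<le> ?p" using card_gt_0_iff[of "UNIV::'a set"] by simp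
  have img: "?phi ` SS e N \<subseteq> SS (neg_lab e) ?K" using phi_mem pm by blast
  have ex: "\<exists>\<tau> \<in> SS (neg_lab e) ?K. \<tau> \<notin> ?phi ` SS e N"
  proof -
    from not_graded_cases[OF ng] show ?thesis
    proof
      assume "\<exists>m. (\<forall>z. \<not> z < m) \<and> fh e m < rank e"
      then obtain m where m: "\<forall>z. \<not> z < m" "fh e m < rank e" by blast
      define \<tau> where "\<tau> = (\<lambda>x. if x = m then ?K else sig0 x)"
      have "valid (neg_lab e) \<tau>" unfolding valid_def
      proof (intro allI impI)
        fix a b :: 'a assume c: "covers a b"
        then have ab: "a < b" unfolding covers_def by simp
        then have bm: "b \<noteq> m" using m(1) by blast
        have "\<tau> b < \<tau> a"
        proof (cases "a = m")
          case True then show ?thesis using bm sig0_le[of b] K p1 unfolding \<tau>_def by simp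
        next
          case False then show ?thesis using bm sig0_strict[OF ab] unfolding \<tau>_def by simp
        qed
        then show "\<tau> b \<le> \<tau> a \<and> (neg_lab e a b = -1 \<longrightarrow> \<tau> b < \<tau> a)" by simp
      qed
      moreover have "\<forall>x. 1 \<le> \<tau> x \<and> \<tau> x \<le> ?K"
      proof
        fix x :: 'a
        have "1 \<le> sig0 x" "sig0 x \<le> ?p" by (rule sig0_ge1, rule sig0_le)
        then show "1 \<le> \<tau> x \<and> \<tau> x \<le> ?K" using K p1 unfolding \<tau>_def by auto
      qed
      ultimately have "\<tau> \<in> SS (neg_lab e) ?K" unfolding SS_def by blast
      moreover have "\<tau> \<notin> ?phi ` SS e N"
      proof
        assume "\<tau> \<in> ?phi ` SS e N"
        then obtain \<sigma> where \<sigma>: "\<sigma> \<in> SS e N" "\<tau> = ?phi \<sigma>" by blast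
        have "\<tau> m = \<sigma> m + fh e m" using \<sigma>(2) by simp
        moreover have "\<sigma> m \<le> N" using \<sigma>(1) unfolding SS_def by blast
        moreover have "\<tau> m = ?K" unfolding \<tau>_def by simp
        ultimately show False using m(2) by linarith
      qed
      ultimately show ?thesis by blast
    next
      assume "\<exists>x y. covers x y \<and> e x y + fh e y < fh e x"
      then obtain x y where c: "covers x y" and sl: "e x y + fh e y < fh e x" by blast
      have xy: "x < y" using c unfolding covers_def by simp
      define \<delta> :: int where "\<delta> = (if e x y = 1 then 1 else 0)"
      have d01: "0 \<le> \<delta>" "\<delta> \<le> 1" unfolding \<delta>_def by auto
      define \<tau> where "\<tau> = (\<lambda>z. (if z = x then sig0 y + ?p + \<delta> else sig0 z + (if z \<le> y then ?p else 0)) + (?K - 2 * ?p))"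
      have txy: "\<tau> x = \<tau> y + \<delta>" using xy unfolding \<tau>_def by auto
      have cov_ne: "\<tau> b < \<tau> a" if cab: "covers a b" and ne: "(a, b) \<noteq> (x, y)" for a b
      proof -
        have ab: "a < b" using cab unfolding covers_def by simp
        show ?thesis
        proof (cases "a = x")
          case True
          then have "b \<noteq> y" using ne by simp
          have "b \<noteq> x" using ab True by simp
          have "\<not> b \<le> y"
          proof
            assume "b \<le> y"
            then have "b < y" using \<open>b \<noteq> y\<close> by simp
            then show False using c ab True unfolding covers_def by blast
          qed
          then show ?thesis using True \<open>b \<noteq> x\<close> sig0_le[of b] sig0_ge1[of y] d01 unfolding \<tau>_def by simp
        next
          case False
          show ?thesis
          proof (cases "b = x")
            case True
            have "a < x" using ab True by simp
            then have "sig0 y + 2 \<le> sig0 a" using sig0_two xy by blast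
            moreover have "a \<le> y" using \<open>a < x\<close> xy by simp
            ultimately show ?thesis using True False d01 unfolding \<tau>_def by simp
          next
            case bx: False
            have "sig0 b < sig0 a" using sig0_strict[OF ab] .
            moreover have "b \<le> y \<Longrightarrow> a \<le> y" using ab by simp
            ultimately show ?thesis using False bx unfolding \<tau>_def by auto
          qed
        qed
      qed
      have "valid (neg_lab e) \<tau>" unfolding valid_def
      proof (intro allI impI)
        fix a b :: 'a assume cab: "covers a b"
        show "\<tau> b \<le> \<tau> a \<and> (neg_lab e a b = -1 \<longrightarrow> \<tau> b < \<tau> a)"
        proof (cases "(a, b) = (x, y)")
          case True
          then show ?thesis using txy d01 unfolding neg_lab_m1 \<delta>_def by auto
        next
          case False then show ?thesis using cov_ne cab by fastforce
        qed
      qed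
      moreover have "\<forall>z. 1 \<le> \<tau> z \<and> \<tau> z \<le> ?K"
      proof
        fix z :: 'a
        have "1 \<le> sig0 z" "sig0 z \<le> ?p" "sig0 y + 1 \<le> ?p" by (rule sig0_ge1, rule sig0_le, rule sig0_le2[OF xy])
        then show "1 \<le> \<tau> z \<and> \<tau> z \<le> ?K" using K d01 p1 sig0_ge1[of y] unfolding \<tau>_def by auto
      qed
      ultimately have "\<tau> \<in> SS (neg_lab e) ?K" unfolding SS_def by blast
      moreover have "\<tau> \<notin> ?phi ` SS e N"
      proof
        assume "\<tau> \<in> ?phi ` SS e N"
        then obtain \<sigma> where \<sigma>: "\<sigma> \<in> SS e N" "\<tau> = ?phi \<sigma>" by blast
        have vs: "valid e \<sigma>" using \<sigma>(1) unfolding SS_def by blast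
        have "\<tau> x = \<sigma> x + fh e x" "\<tau> y = \<sigma> y + fh e y" using \<sigma>(2) by simp_all
        then have diff: "\<sigma> x - \<sigma> y < \<delta> - e x y" using txy sl by linarith
        show False
        proof (cases "e x y = 1")
          case True
          then have "\<sigma> y \<le> \<sigma> x" using vs c unfolding valid_def by blast
          then show False using diff True unfolding \<delta>_def by simp
        next
          case False
          then have "e x y = -1" using pm unfolding pm_def by blast
          then have "\<sigma> y < \<sigma> x" using vs c unfolding valid_def by blast
          then show False using diff False \<open>e x y = -1\<close> unfolding \<delta>_def by simp
        qed
      qed
      ultimately show ?thesis by blast
    qed
  qed
  then have "?phi ` SS e N \<subset> SS (neg_lab e) ?K" using img by blast
  then have "card (?phi ` SS e N) < card (SS (neg_lab e) ?K)" by (intro psubset_card_mono finite_SS)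
  moreover have "card (?phi ` SS e N) = card (SS e N)" by (intro card_image phi_inj)
  ultimately show ?thesis unfolding CC_def by simp
qed

definition FB :: "('a::order \<Rightarrow> 'a \<Rightarrow> int) \<Rightarrow> int set \<Rightarrow> ('a \<Rightarrow> int) set" where
  "FB e T = {\<tau>. valid e \<tau> \<and> range \<tau> = T}"

lemma finite_FB: "finite U \<Longrightarrow> finite (FB e U :: ('a::{order,finite} \<Rightarrow> int) set)"
proof -
  assume U: "finite U"
  have "FB e U \<subseteq> {f. \<forall>x. (x \<in> (UNIV::'a set) \<longrightarrow> f x \<in> U) \<and> (x \<notin> UNIV \<longrightarrow> f x = 0)}"
    unfolding FB_def by auto
  then show ?thesis using finite_set_of_finite_funs[of "UNIV::'a set" U 0] U finite_subset by auto
qed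

lemma FB_le:
  fixes e :: "'a::{order,finite} \<Rightarrow> 'a \<Rightarrow> int"
  assumes fin: "finite U" and bij: "bij_betw h T U" and sm: "\<And>a b. a \<in> T \<Longrightarrow> b \<in> T \<Longrightarrow> a < b \<Longrightarrow> h a < h b"
  shows "card (FB e T) \<le> card (FB e U)"
proof (rule card_inj_on_le[where f="\<lambda>\<tau>. h \<circ> \<tau>"])
  have mono: "h a \<le> h b" if "a \<in> T" "b \<in> T" "a \<le> b" for a b
    using sm[OF that(1,2)] that(3) by (cases "a = b") auto
  show "inj_on (\<lambda>\<tau>. h \<circ> \<tau>) (FB e T)"
  proof (rule inj_onI)
    fix s t assume s: "s \<in> FB e T" and t: "t \<in> FB e T" and eq: "h \<circ> s = h \<circ> t"
    show "s = t"
    proof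
      fix x
      have "s x \<in> T" "t x \<in> T" using s t unfolding FB_def by auto
      moreover have "h (s x) = h (t x)" using eq by (metis comp_apply)
      ultimately show "s x = t x" using bij unfolding bij_betw_def inj_on_def by blast
    qed
  qed
  show "(\<lambda>\<tau>. h \<circ> \<tau>) ` FB e T \<subseteq> FB e U"
  proof
    fix \<rho> assume "\<rho> \<in> (\<lambda>\<tau>. h \<circ> \<tau>) ` FB e T"
    then obtain \<tau> where t: "\<tau> \<in> FB e T" "\<rho> = h \<circ> \<tau>" by blast
    have vt: "valid e \<tau>" and rt: "range \<tau> = T" using t(1) unfolding FB_def by auto
    have inT: "\<And>x. \<tau> x \<in> T" using rt by auto
    have "valid e \<rho>" unfolding valid_def
    proof (intro allI impI)
      fix x y :: 'a assume c: "covers x y"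
      have "\<tau> y \<le> \<tau> x" "e x y = -1 \<longrightarrow> \<tau> y < \<tau> x" using vt c unfolding valid_def by auto
      then show "\<rho> y \<le> \<rho> x \<and> (e x y = -1 \<longrightarrow> \<rho> y < \<rho> x)"
        using mono[OF inT inT] sm[OF inT inT] t(2) by auto
    qed
    moreover have "range \<rho> = h ` range \<tau>" using t(2) by (simp add: image_image comp_def)
    then have "range \<rho> = U" using rt bij unfolding bij_betw_def by simp
    ultimately show "\<rho> \<in> FB e U" unfolding FB_def by blast
  qed
  show "finite (FB e U)" using finite_FB[OF fin] .
qed

lemma FB_eq:
  fixes e :: "'a::{order,finite} \<Rightarrow> 'a \<Rightarrow> int"
  assumes finT: "finite T" and bij: "bij_betw h T U" and sm: "\<And>a b. a \<in> T \<Longrightarrow> b \<in> T \<Longrightarrow> a < b \<Longrightarrow> h a < h b"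
  shows "card (FB e T) = card (FB e U)"
proof (rule antisym)
  have finU: "finite U" using bij finT bij_betw_finite by blast
  show "card (FB e T) \<le> card (FB e U)" by (rule FB_le[OF finU bij sm])
  let ?g = "the_inv_into T h"
  have bij2: "bij_betw ?g U T" using bij by (rule bij_betw_the_inv_into)
  have sm2: "?g a < ?g b" if "a \<in> U" "b \<in> U" "a < b" for a b
  proof (rule ccontr)
    assume "\<not> ?g a < ?g b"
    then have "?g b \<le> ?g a" by simp
    moreover have "?g a \<in> T" "?g b \<in> T" using bij2 that unfolding bij_betw_def by auto
    ultimately have "h (?g b) \<le> h (?g a)" using sm by (cases "?g b = ?g a") (auto simp: le_less)
    moreover have "h (?g a) = a" "h (?g b) = b" using bij that unfolding bij_betw_def
      by (auto intro: f_the_inv_into_f)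
    ultimately show False using that(3) by simp
  qed
  show "card (FB e U) \<le> card (FB e T)" by (rule FB_le[OF finT bij2 sm2])
qed

lemma rank_bij:
  fixes T :: "int set"
  assumes fin: "finite T"
  shows "\<exists>h. bij_betw h T {1..int (card T)} \<and> (\<forall>a\<in>T. \<forall>b\<in>T. a < b \<longrightarrow> h a < h b)"
proof -
  define h where "h v = int (card {u\<in>T. u \<le> v})" for v
  have sm: "\<forall>a\<in>T. \<forall>b\<in>T. a < b \<longrightarrow> h a < h b"
  proof (intro ballI impI)
    fix a b assume a: "a \<in> T" and b: "b \<in> T" and ab: "a < b"
    have "{u\<in>T. u \<le> a} \<subseteq> {u\<in>T. u \<le> b}" using ab by auto
    moreover have "b \<in> {u\<in>T. u \<le> b}" "b \<notin> {u\<in>T. u \<le> a}" using b ab by auto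
    ultimately have "{u\<in>T. u \<le> a} \<subset> {u\<in>T. u \<le> b}" by blast
    then have "card {u\<in>T. u \<le> a} < card {u\<in>T. u \<le> b}" using fin by (intro psubset_card_mono) auto
    then show "h a < h b" unfolding h_def by simp
  qed
  have inj: "inj_on h T"
  proof (rule inj_onI)
    fix a b assume "a \<in> T" "b \<in> T" "h a = h b"
    then show "a = b" using sm by (metis less_irrefl linorder_neqE)
  qed
  have sub: "h ` T \<subseteq> {1..int (card T)}"
  proof
    fix y assume "y \<in> h ` T"
    then obtain v where v: "v \<in> T" "y = h v" by blast
    have "{u\<in>T. u \<le> v} \<noteq> {}" using v by auto
    then have "1 \<le> card {u\<in>T. u \<le> v}" using fin by (simp add: Suc_leI card_gt_0_iff)
    moreover have "card {u\<in>T. u \<le> v} \<le> card T" using fin by (intro card_mono) auto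
    ultimately show "y \<in> {1..int (card T)}" using v by (simp add: h_def)
  qed
  have "card (h ` T) = card T" using card_image[OF inj] .
  also have "\<dots> = card {1..int (card T)}" by simp
  finally have "h ` T = {1..int (card T)}" using sub by (intro card_subset_eq) auto
  then have "bij_betw h T {1..int (card T)}" using inj unfolding bij_betw_def by blast
  then show ?thesis using sm by blast
qed

definition aa :: "('a::order \<Rightarrow> 'a \<Rightarrow> int) \<Rightarrow> nat \<Rightarrow> nat" where
  "aa e k = card (FB e {1..int k})"

lemma FB_card: "finite T \<Longrightarrow> card (FB e T) = aa (e::'a::{order,finite} \<Rightarrow> 'a \<Rightarrow> int) (card T)"
  unfolding aa_def using rank_bij FB_eq by metis

lemma aa_zero: "card (UNIV::'a set) < k \<Longrightarrow> aa (e::'a::{order,finite} \<Rightarrow> 'a \<Rightarrow> int) k = 0"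
proof -
  assume k: "card (UNIV::'a set) < k"
  have "FB e {1..int k} = {}"
  proof (rule ccontr)
    assume "FB e {1..int k} \<noteq> {}"
    then obtain \<tau> :: "'a \<Rightarrow> int" where "range \<tau> = {1..int k}" unfolding FB_def by blast
    then have "card {1..int k} \<le> card (UNIV::'a set)" by (metis card_image_le finite)
    then show False using k by simp
  qed
  then show ?thesis unfolding aa_def by simp
qed

lemma sum_pow_card:
  assumes "finite A"
  shows "(\<Sum>T\<in>Pow A. g (card T)) = (\<Sum>j\<le>card A. of_nat (card A choose j) * (g j :: 'b::comm_semiring_1))"
proof -
  have P: "Pow A = (\<Union>j\<in>{..card A}. {T. T \<subseteq> A \<and> card T = j})"
    using assms by (auto intro: card_mono)
  have "(\<Sum>T\<in>Pow A. g (card T)) = (\<Sum>j\<le>card A. \<Sum>T\<in>{T. T \<subseteq> A \<and> card T = j}. g (card T))"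
    unfolding P using assms by (intro sum.UNION_disjoint) auto
  also have "\<dots> = (\<Sum>j\<le>card A. of_nat (card A choose j) * g j)"
  proof (rule sum.cong[OF refl])
    fix j
    have "(\<Sum>T\<in>{T. T \<subseteq> A \<and> card T = j}. g (card T)) = (\<Sum>T\<in>{T. T \<subseteq> A \<and> card T = j}. g j)"
      by (rule sum.cong) auto
    also have "\<dots> = of_nat (card {T. T \<subseteq> A \<and> card T = j}) * g j" by simp
    also have "\<dots> = of_nat (card A choose j) * g j" using n_subsets[OF assms] by simp
    finally show "(\<Sum>T\<in>{T. T \<subseteq> A \<and> card T = j}. g (card T)) = of_nat (card A choose j) * g j" .
  qed
  finally show ?thesis .
qed

lemma CC_sum:
  fixes e :: "'a::{order,finite} \<Rightarrow> 'a \<Rightarrow> int"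
  shows "CC e (int n) = (\<Sum>j\<le>card (UNIV::'a set). (n choose j) * aa e j)"
proof -
  have SU: "SS e (int n) = (\<Union>T\<in>Pow {1..int n}. FB e T)"
    unfolding SS_def FB_def by (auto simp: image_subset_iff)
  have "CC e (int n) = (\<Sum>T\<in>Pow {1..int n}. card (FB e T))"
    unfolding CC_def SU
  proof (rule card_UN_disjoint)
    show "\<forall>T\<in>Pow {1..int n}. finite (FB e T)" using finite_FB finite_subset by blast
  qed (auto simp: FB_def)
  also have "\<dots> = (\<Sum>T\<in>Pow {1..int n}. aa e (card T))"
    by (rule sum.cong[OF refl]) (auto intro: FB_card finite_subset)
  also have "\<dots> = (\<Sum>j\<le>n. (n choose j) * aa e j)"
    using sum_pow_card[of "{1..int n}" "aa e"] by simp
  also have "\<dots> = (\<Sum>j\<le>n + card (UNIV::'a set). (n choose j) * aa e j)"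
    by (rule sum.mono_neutral_left) auto
  also have "\<dots> = (\<Sum>j\<le>card (UNIV::'a set). (n choose j) * aa e j)"
    by (rule sum.mono_neutral_right) (auto simp: aa_zero)
  finally show ?thesis .
qed

definition bp :: "nat \<Rightarrow> real poly" where
  "bp j = smult (1 / fact j) (\<Prod>i=0..<j. [:- of_nat i, 1:])"

lemma poly_bp: "poly (bp j) (real n) = real (n choose j)"
proof -
  have "poly (bp j) (real n) = (\<Prod>i=0..<j. real n - of_nat i) / fact j"
    unfolding bp_def by (simp add: poly_prod)
  also have "\<dots> = real n gchoose j" by (simp add: gbinomial_prod_rev)
  finally show ?thesis by (simp add: binomial_gbinomial)
qed

lemma Omega_ex:
  fixes e :: "'a::{order,finite} \<Rightarrow> 'a \<Rightarrow> int"
  shows "\<exists>q. \<forall>n::nat. 1 \<le> n \<longrightarrow> poly q (real n) = real (Omega_count e n)"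
proof -
  define q where "q = (\<Sum>j\<le>card (UNIV::'a set). smult (real (aa e j)) (bp j))"
  have "poly q (real n) = real (Omega_count e n)" for n
    unfolding q_def count_SS CC_sum poly_sum by (simp add: poly_bp mult.commute)
  then show ?thesis by blast
qed

lemma Omega_prop:
  fixes e :: "'a::{order,finite} \<Rightarrow> 'a \<Rightarrow> int"
  assumes "1 \<le> n"
  shows "poly (Omega e) (real n) = real (Omega_count e n)"
proof -
  have "\<exists>!q. \<forall>n::nat. 1 \<le> n \<longrightarrow> poly q (real n) = real (Omega_count e n)"
  proof (rule ex_ex1I)
    show "\<exists>q. \<forall>n::nat. 1 \<le> n \<longrightarrow> poly q (real n) = real (Omega_count e n)" by (rule Omega_ex)
  next
    fix q1 q2 :: "real poly"
    assume h1: "\<forall>n::nat. 1 \<le> n \<longrightarrow> poly q1 (real n) = real (Omega_count e n)"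
      and h2: "\<forall>n::nat. 1 \<le> n \<longrightarrow> poly q2 (real n) = real (Omega_count e n)"
    show "q1 = q2"
    proof (rule ccontr)
      assume "q1 \<noteq> q2"
      then have "q1 - q2 \<noteq> 0" by simp
      then have fin: "finite {x. poly (q1 - q2) x = 0}" by (rule poly_roots_finite)
      have "real ` {1..} \<subseteq> {x. poly (q1 - q2) x = 0}" using h1 h2 by auto
      then have "finite (real ` {1::nat..})" using fin finite_subset by blast
      then have "finite {1::nat..}" using finite_imageD inj_on_of_nat by blast
      then show False using infinite_Ici[of "1::nat"] by simp
    qed
  qed
  then show ?thesis unfolding Omega_def using theI'[where P="\<lambda>q. \<forall>n::nat. 1 \<le> n \<longrightarrow> poly q (real n) = real (Omega_count e n)"] assms by blast
qed

theorem corollary7p4: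
  fixes \<omega> :: "'a::{order,finite} \<Rightarrow> nat" and s :: int
  assumes "bij_betw \<omega> UNIV {1..card (UNIV :: 'a set)}"
    and "\<forall>t::real. poly (Omega (eps_of \<omega>)) t = poly (Omega (neg_lab (eps_of \<omega>))) (t + of_int s)"
  shows "- rank (neg_lab (eps_of \<omega>)) \<le> s \<and> s \<le> rank (eps_of \<omega>)
    \<and> (s = rank (eps_of \<omega>) \<longleftrightarrow> graded (eps_of \<omega>))
    \<and> (s = - rank (neg_lab (eps_of \<omega>)) \<longleftrightarrow> graded (eps_of \<omega>))"
proof -
  define \<epsilon> where "\<epsilon> = eps_of \<omega>"
  define \<nu> where "\<nu> = neg_lab \<epsilon>"
  define r where "r = rank \<epsilon>"
  define r' where "r' = rank \<nu>"
  define p where "p = int (card (UNIV::'a set))"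
  have pe: "pm \<epsilon>" unfolding \<epsilon>_def by (rule pm_eps)
  have pn: "pm \<nu>" unfolding \<nu>_def using pe by (rule pm_neg)
  have nn: "neg_lab \<nu> = \<epsilon>" unfolding \<nu>_def by (rule neg_neg)
  have H: "CC \<epsilon> N = CC \<nu> (N + s)" if N1: "1 \<le> N" and Ns: "1 \<le> N + s" for N
  proof -
    obtain n :: nat where n: "N = int n" using N1 by (metis nonneg_int_cases order_trans zero_le_one)
    obtain m :: nat where m: "N + s = int m" using Ns by (metis nonneg_int_cases order_trans zero_le_one)
    have n1: "1 \<le> n" using N1 n by simp
    have m1: "1 \<le> m" using Ns m by simp
    have e1: "poly (Omega \<epsilon>) (real n) = poly (Omega \<nu>) (real n + of_int s)"
      using assms(2) unfolding \<epsilon>_def \<nu>_def by blast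
    have "of_int (int n + s) = (of_int (int m) :: real)" using n m by simp
    then have e2: "real n + of_int s = real m" by simp
    have "real (Omega_count \<epsilon> n) = real (Omega_count \<nu> m)"
      using e1 e2 Omega_prop[OF n1, of \<epsilon>] Omega_prop[OF m1, of \<nu>] by simp
    then have "Omega_count \<epsilon> n = Omega_count \<nu> m" by (rule of_nat_eq_iff[THEN iffD1])
    then have "CC \<epsilon> (int n) = CC \<nu> (int m)" unfolding count_SS .
    moreover have "N + s = int m" by (rule m)
    ultimately show ?thesis using n by simp
  qed
  define N0 where "N0 = 2 * p + \<bar>s\<bar> + \<bar>r\<bar> + \<bar>r'\<bar> + 1"
  have p1: "1 \<le> p" unfolding p_def using card_gt_0_iff[of "UNIV::'a set"] by simp
  have ab: "s \<le> \<bar>s\<bar>" "- s \<le> \<bar>s\<bar>" "r \<le> \<bar>r\<bar>" "- r \<le> \<bar>r\<bar>" "r' \<le> \<bar>r'\<bar>" "- r' \<le> \<bar>r'\<bar>"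
    by linarith+
  have N0b: "N0 = 2 * p + \<bar>s\<bar> + \<bar>r\<bar> + \<bar>r'\<bar> + 1" by (rule N0_def)
  have HN: "CC \<epsilon> N0 = CC \<nu> (N0 + s)"
  proof (rule H)
    show "1 \<le> N0" using N0b ab p1 by linarith
    show "1 \<le> N0 + s" using N0b ab p1 by linarith
  qed
  have le1: "s \<le> r"
  proof (rule ccontr)
    assume a: "\<not> s \<le> r"
    have "CC \<epsilon> N0 \<le> CC \<nu> (N0 + r)" unfolding r_def \<nu>_def using inj_count[OF pe] .
    also have "\<dots> < CC \<nu> (N0 + s)"
    proof (rule CC_strict)
      show "int (card (UNIV::'a set)) \<le> N0 + r" using N0b ab p1 unfolding p_def by linarith
      show "N0 + r < N0 + s" using a by linarith
    qed
    finally show False using HN by simp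
  qed
  have le2: "- r' \<le> s"
  proof (rule ccontr)
    assume a: "\<not> - r' \<le> s"
    have "CC \<nu> (N0 + s) \<le> CC (neg_lab \<nu>) (N0 + s + r')" unfolding r'_def using inj_count[OF pn] .
    also have "\<dots> = CC \<epsilon> (N0 + s + r')" using nn by simp
    also have "\<dots> < CC \<epsilon> N0"
    proof (rule CC_strict)
      show "int (card (UNIV::'a set)) \<le> N0 + s + r'" using N0b ab p1 unfolding p_def by linarith
      show "N0 + s + r' < N0" using a by linarith
    qed
    finally show False using HN by simp
  qed
  have g1: "graded \<epsilon>" if sr: "s = r"
  proof (rule ccontr)
    assume ng: "\<not> graded \<epsilon>"
    have "CC \<epsilon> N0 < CC (neg_lab \<epsilon>) (N0 + rank \<epsilon>)"
    proof (rule strict_count[OF pe ng])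
      show "2 * int (card (UNIV::'a set)) \<le> N0 + rank \<epsilon>" using N0b ab p1 unfolding p_def r_def by linarith
    qed
    then have "CC \<epsilon> N0 < CC \<nu> (N0 + s)" unfolding \<nu>_def sr r_def .
    then show False using HN by simp
  qed
  have g2: "graded \<epsilon>" if sr: "s = - r'"
  proof (rule ccontr)
    assume "\<not> graded \<epsilon>"
    then have ng: "\<not> graded \<nu>" unfolding \<nu>_def using graded_neg by blast
    have "CC \<nu> (N0 + s) < CC (neg_lab \<nu>) (N0 + s + rank \<nu>)"
    proof (rule strict_count[OF pn ng])
      show "2 * int (card (UNIV::'a set)) \<le> N0 + s + rank \<nu>" using N0b ab p1 sr unfolding p_def r'_def by linarith
    qed
    moreover have "N0 + s + rank \<nu> = N0" using sr unfolding r'_def by simp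
    ultimately have "CC \<nu> (N0 + s) < CC \<epsilon> N0" using nn by simp
    then show False using HN by simp
  qed
  have g3: "s = r \<and> s = - r'" if "graded \<epsilon>"
  proof -
    have "r' = - r" unfolding r'_def r_def \<nu>_def using graded_rank[OF that] .
    then show ?thesis using le1 le2 by simp
  qed
  show ?thesis using le1 le2 g1 g2 g3 unfolding \<epsilon>_def[symmetric] \<nu>_def[symmetric] r_def[symmetric] r'_def[symmetric]
    by blast
qed

end
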